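(* Let $D$ and $r$ be positive integers and let $p:\mathbb N\to\mathbb C$ be a quasi-polynomial $p(n)=d_{r-1}(n)n^{r-1}+\cdots+d_1(n)n+d_0(n)$, where each $d_m:\mathbb N\to\mathbb C$ is periodic with period $D$ and $d_{r-1}$ is not identically zero. Write $\sum_{n\geq 0}p(n)z^n=L(z)/M(z)$ in lowest terms with partial fraction decomposition $$\frac{L(z)}{M(z)}=\sum_{M(\lambda)=0}\sum_{\ell=1}^{m(\lambda)}\frac{c_{\lambda,\ell}}{(\lambda-z)^{\ell}},$$ where $m(\lambda)$ is the multiplicity of $\lambda$ as a root of $M$. Let $\gamma$ be a root of $M$. Then for each $1\leq m\leq m(\gamma)$, $$ c_{\gamma,m} = \gamma^{m}(m-1)! \sum_{\ell=m}^{m(\gamma)}(-1)^{\ell-m}\left\{ {\ell \atop m}\right\}\frac{1}{D}\sum_{v=0}^{D-1} \gamma^{v}d_{\ell-1}(v).$$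
   Context: For such $p$ the generating function $\sum_{n\ge0}p(n)z^n$ is a rational function; in lowest terms $L/M$ one has $\deg L<\deg M$ and every root $\lambda$ of $M$ satisfies $\lambda^D=1$. $\left\{ {\ell \atop m}\right\}$ denotes the Stirling number of the second kind (the number of partitions of an $\ell$-element set into $m$ nonempty blocks). *)

theory Defs
  imports Complex_Main "HOL-Computational_Algebra.Computational_Algebra" "HOL-Combinatorics.Stirling"
begin

end

theory Submission
  imports Defs
begin


lemma sum_atMost_shift0:
  fixes g :: "nat \<Rightarrow> 'a::comm_monoid_add"
  shows "(\<Sum>i\<le>r. g i) = g 0 + (\<Sum>i<r. g (Suc i))"
  by (cases r) (simp_all add: sum.atMost_Suc_shift lessThan_Suc_atMost del: sum.atMost_Suc)

lemma pascal_alt: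
  fixes f :: "nat \<Rightarrow> complex"
  shows "(\<Sum>i\<le>Suc r. (-1)^i * of_nat (Suc r choose i) * f i)
       = (\<Sum>i\<le>r. (-1)^i * of_nat (r choose i) * (f i - f (Suc i)))"
proof -
  have e1: "(\<Sum>i\<le>Suc r. (-1)^i * of_nat (Suc r choose i) * f i)
      = f 0 + (\<Sum>i\<le>r. (-1)^(Suc i) * of_nat (Suc r choose Suc i) * f (Suc i))"
    by (subst sum.atMost_Suc_shift) simp
  have e2: "(\<Sum>i\<le>r. (-1)^(Suc i) * of_nat (Suc r choose Suc i) * f (Suc i))
      = (\<Sum>i\<le>r. (-1)^(Suc i) * of_nat (r choose Suc i) * f (Suc i))
       - (\<Sum>i\<le>r. (-1)^i * of_nat (r choose i) * f (Suc i))"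
    by (simp only: sum_subtractf[symmetric]) (intro sum.cong, simp_all add: algebra_simps)
  have e3: "(\<Sum>i\<le>r. (-1)^(Suc i) * of_nat (r choose Suc i) * f (Suc i))
      = (\<Sum>i<r. (-1)^(Suc i) * of_nat (r choose Suc i) * f (Suc i))"
    by (simp add: lessThan_Suc_atMost[symmetric])
  have e4: "f 0 + (\<Sum>i<r. (-1)^(Suc i) * of_nat (r choose Suc i) * f (Suc i)) = (\<Sum>i\<le>r. (-1)^i * of_nat (r choose i) * f i)"
    by (subst sum_atMost_shift0[where g="\<lambda>i. (-1)^i * of_nat (r choose i) * f i"]) simp
  have e5: "(\<Sum>i\<le>r. (-1)^i * of_nat (r choose i) * (f i - f (Suc i)))
     = (\<Sum>i\<le>r. (-1)^i * of_nat (r choose i) * f i) - (\<Sum>i\<le>r. (-1)^i * of_nat (r choose i) * f (Suc i))"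
    by (simp only: sum_subtractf[symmetric]) (intro sum.cong, simp_all add: algebra_simps)
  show ?thesis unfolding e1 e2 e3 e5 e4[symmetric] by simp
qed

lemma alt_sum_poly:
  fixes q :: "complex poly"
  assumes "degree q < r"
  shows "(\<Sum>i\<le>r. (-1)^i * of_nat (r choose i) * poly q (of_nat i)) = 0"
  using assms
proof (induction r arbitrary: q)
  case 0 then show ?case by simp
next
  case (Suc r)
  define q' where "q' = q - pcompose q [:1,1:]"
  have pq: "poly q' (of_nat i) = poly q (of_nat i) - poly q (of_nat (Suc i))" for i
    by (simp add: q'_def poly_pcompose algebra_simps)
  have "(\<Sum>i\<le>Suc r. (-1)^i * of_nat (Suc r choose i) * poly q (of_nat i))
     = (\<Sum>i\<le>r. (-1)^i * of_nat (r choose i) * poly q' (of_nat i))"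
    by (subst pascal_alt) (simp add: pq)
  also have "\<dots> = 0"
  proof (cases "q' = 0")
    case True then show ?thesis by simp
  next
    case False
    have d1: "degree q' \<le> degree q"
      unfolding q'_def by (rule order.trans[OF degree_diff_le]) (auto simp: degree_pcompose)
    have c: "coeff q' (degree q) = 0"
    proof (cases "degree q = 0")
      case True
      then obtain c where "q = [:c:]" by (metis degree_eq_zeroE)
      then show ?thesis by (simp add: q'_def)
    next
      case False
      have "coeff (pcompose q [:1,1:]) (degree q) = lead_coeff q"
        using lead_coeff_comp[of "[:1,1:]" q] by (simp add: degree_pcompose)
      then show ?thesis by (simp add: q'_def)
    qed
    have "degree q' < degree q"
    proof (rule ccontr)
      assume "\<not> ?thesis"
      then have "degree q' = degree q" using d1 by simp
      then have "lead_coeff q' = 0" using c by simp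
      then show False using False by simp
    qed
    then show ?thesis using Suc by simp
  qed
  finally show ?case .
qed



lemma stirling_inv:
  assumes "j < K"
  shows "(\<Sum>l<K. (-1)^(l+m) * int (Stirling l m) * int (stirling j l)) = (if j = m then 1 else 0)"
  using assms
proof (induction j arbitrary: m)
  case 0
  have "(\<Sum>l<K. (-1)^(l+m) * int (Stirling l m) * int (stirling 0 l)) = (\<Sum>l\<in>{0}. (-1)^(l+m) * int (Stirling l m) * int (stirling 0 l))"
    by (rule sum.mono_neutral_right) (use 0 in auto)
  then show ?case by (cases m) auto
next
  case (Suc j)
  obtain K' where K: "K = Suc K'" using Suc.prems by (cases K) auto
  have jK: "j < K" "j < K'" using Suc.prems K by auto
  define T where "T m = (\<Sum>l<K. (-1)^(l+m) * int (Stirling l m) * int (stirling j l))" for m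
  have IH: "T m = (if j = m then 1 else 0)" for m using Suc.IH[OF jK(1)] by (simp add: T_def)
  have TK': "(\<Sum>l<K'. (-1)^(l+m) * int (Stirling l m) * int (stirling j l)) = T m" for m
    unfolding T_def K using jK(2) by (simp add: sum.lessThan_Suc)
  have T0: "T m = (-1)^m * int (Stirling 0 m) * int (stirling j 0) + (\<Sum>l<K'. (-1)^(Suc l+m) * int (Stirling (Suc l) m) * int (stirling j (Suc l)))" for m
    unfolding T_def K by (subst sum.lessThan_Suc_shift) simp
  have "(\<Sum>l<K. (-1)^(l+m) * int (Stirling l m) * int (stirling (Suc j) l))
     = (\<Sum>l<K'. (-1)^(Suc l+m) * int (Stirling (Suc l) m) * (int j * int (stirling j (Suc l)) + int (stirling j l)))"
    unfolding K by (subst sum.lessThan_Suc_shift) simp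
  also have "\<dots> = int j * (\<Sum>l<K'. (-1)^(Suc l+m) * int (Stirling (Suc l) m) * int (stirling j (Suc l)))
      + (\<Sum>l<K'. (-1)^(Suc l+m) * int (Stirling (Suc l) m) * int (stirling j l))"
    by (simp only: sum_distrib_left sum.distrib[symmetric]) (intro sum.cong, simp_all add: algebra_simps)
  also have "\<dots> = (if Suc j = m then 1 else 0)"
  proof (cases m)
    case 0
    have s0: "int (stirling j 0) = (if j = 0 then 1 else 0)" by (cases j) auto
    show ?thesis using T0[of 0] IH[of 0] s0 0 by auto
  next
    case (Suc m')
    have "(\<Sum>l<K'. (-1)^(Suc l+m) * int (Stirling (Suc l) m) * int (stirling j l))
        = (\<Sum>l<K'. - (int m * ((-1)^(l+m) * int (Stirling l m) * int (stirling j l))) + (-1)^(l+m') * int (Stirling l m') * int (stirling j l))"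
      by (intro sum.cong) (simp_all add: Suc algebra_simps)
    also have "\<dots> = - int m * T m + T m'"
      by (simp only: sum.distrib sum_negf sum_distrib_left[symmetric] TK' mult_minus_left)
    finally have P2: "(\<Sum>l<K'. (-1)^(Suc l+m) * int (Stirling (Suc l) m) * int (stirling j l)) = - int m * T m + T m'" .
    have P1: "(\<Sum>l<K'. (-1)^(Suc l+m) * int (Stirling (Suc l) m) * int (stirling j (Suc l))) = T m"
      using T0[of m] by (simp add: Suc)
    show ?thesis unfolding P1 P2 IH using Suc by auto
  qed
  finally show ?case .
qed



definition Hf :: "complex \<Rightarrow> nat \<Rightarrow> complex fps" where
  "Hf a j = Abs_fps (\<lambda>n. of_nat ((n+j) choose j) / a^(n+j+1))"

lemma Hf_nth: "Hf a j $ n = of_nat ((n+j) choose j) / a^(n+j+1)"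
  by (simp add: Hf_def)

lemma mult_aX_nth: fixes F :: "complex fps" shows "(F * (fps_const a - fps_X)) $ n = F $ n * a - (if n = 0 then 0 else F $ (n - 1))"
proof -
  have "F * (fps_const a - fps_X) = F * fps_const a - F * fps_X" by (simp add: algebra_simps)
  then show ?thesis by (simp only: fps_sub_nth fps_mult_right_const_nth fps_X_mult_right_nth)
qed

lemma Hf_step:
  assumes "a \<noteq> 0"
  shows "Hf a (Suc j) * (fps_const a - fps_X) = Hf a j"
proof (rule fps_ext)
  fix n
  show "(Hf a (Suc j) * (fps_const a - fps_X)) $ n = Hf a j $ n"
  proof (cases n)
    case 0 then show ?thesis using assms by (simp add: mult_aX_nth Hf_nth)
  next
    case (Suc n')
    have b: "(Suc (n' + Suc j) choose Suc j) = ((n'+Suc j) choose Suc j) + ((n'+Suc j) choose j)"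
      by (subst binomial_Suc_Suc) simp
    have "(Hf a (Suc j) * (fps_const a - fps_X)) $ n
       = of_nat (Suc (n' + Suc j) choose Suc j) / a^(n' + Suc j + 1) - of_nat ((n' + Suc j) choose Suc j) / a^(n' + Suc j + 1)"
      using assms by (simp add: mult_aX_nth Hf_nth Suc)
    also have "\<dots> = of_nat ((n' + Suc j) choose j) / a^(n' + Suc j + 1)"
      unfolding b by (simp add: diff_divide_distrib add_divide_distrib)
    also have "\<dots> = Hf a j $ n" by (simp add: Hf_nth Suc)
    finally show ?thesis .
  qed
qed

lemma Hf_0:
  assumes "a \<noteq> 0"
  shows "Hf a 0 * (fps_const a - fps_X) = 1"
proof (rule fps_ext)
  fix n show "(Hf a 0 * (fps_const a - fps_X)) $ n = 1 $ n"
    using assms by (cases n) (simp_all add: mult_aX_nth Hf_nth)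
qed

lemma Hf_inv:
  assumes "a \<noteq> 0"
  shows "Hf a j * (fps_const a - fps_X)^(Suc j) = 1"
proof (induction j)
  case 0 then show ?case using Hf_0[OF assms] by simp
next
  case (Suc j)
  have "Hf a (Suc j) * (fps_const a - fps_X)^(Suc (Suc j)) = (Hf a (Suc j) * (fps_const a - fps_X)) * (fps_const a - fps_X)^(Suc j)"
    by (simp only: power_Suc[of _ "Suc j"] mult.assoc)
  also have "\<dots> = 1" unfolding Hf_step[OF assms] by (rule Suc.IH)
  finally show ?case .
qed

lemma poly_pochhammer: "poly (pochhammer P j) x = pochhammer (poly P x) j"
  by (induction j) (simp_all add: pochhammer_Suc)

definition Pb :: "nat \<Rightarrow> complex poly" where
  "Pb j = smult (1 / fact j) (pochhammer [:1,1:] j)"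

lemma poly_Pb: "poly (Pb j) (of_nat n) = of_nat ((n+j) choose j)"
proof -
  have "poly (Pb j) (of_nat n) = pochhammer (of_nat n + 1) j / fact j"
    by (simp add: Pb_def poly_pochhammer algebra_simps)
  also have "\<dots> = (of_nat (n+j) gchoose j)" by (simp add: gbinomial_pochhammer')
  also have "\<dots> = of_nat ((n+j) choose j)" by (simp add: binomial_gbinomial)
  finally show ?thesis .
qed

lemma coeff_poch1: "coeff (pochhammer [:1,1:] j) l = (of_nat (stirling (Suc j) (Suc l)) :: complex)"
proof -
  have h: "[:0,1:] + 1 = ([:1,1:] :: complex poly)" by (simp add: one_pCons)
  have "pochhammer [:0,1:] (Suc j) = [:0,1:] * pochhammer ([:0,1::complex:] + 1) j" by (rule pochhammer_rec)
  then have e: "pochhammer [:0,1:] (Suc j) = pCons 0 (pochhammer [:1,(1::complex):] j)" unfolding h by simp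
  have "pochhammer [:0,1:] (Suc j) = (\<Sum>k\<le>Suc j. of_nat (stirling (Suc j) k) * [:0,1::complex:] ^ k)"
    by (rule stirling_pochhammer[symmetric])
  also have "\<dots> = (\<Sum>k\<le>Suc j. monom (of_nat (stirling (Suc j) k)) k)"
    by (intro sum.cong refl) (simp add: monom_altdef of_nat_poly)
  finally have es: "pochhammer [:0,1:] (Suc j) = (\<Sum>k\<le>Suc j. monom (of_nat (stirling (Suc j) k) :: complex) k)" .
  have "coeff (pochhammer [:0,1::complex:] (Suc j)) (Suc l) = (\<Sum>k\<le>Suc j. coeff (monom (of_nat (stirling (Suc j) k) :: complex) k) (Suc l))"
    by (simp only: es coeff_sum)
  also have "\<dots> = (\<Sum>k\<le>Suc j. if k = Suc l then of_nat (stirling (Suc j) k) else (0::complex))"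
    by (intro sum.cong refl) (auto simp: coeff_monom)
  also have "\<dots> = of_nat (stirling (Suc j) (Suc l))"
    by (simp only: sum.delta finite_atMost) auto
  finally show ?thesis using e by simp
qed



lemma poly_eq_on_infinite:
  fixes A B :: "complex poly"
  assumes "infinite S" "\<And>z. z \<in> S \<Longrightarrow> poly A z = poly B z"
  shows "A = B"
proof (rule ccontr)
  assume "A \<noteq> B"
  then have "A - B \<noteq> 0" by simp
  then have "finite {z. poly (A - B) z = 0}" by (rule poly_roots_finite)
  moreover have "S \<subseteq> {z. poly (A - B) z = 0}" using assms(2) by auto
  ultimately show False using assms(1) finite_subset by blast
qed

lemma poly_eq_outside_finite:
  fixes A B :: "complex poly"
  assumes "finite R" "\<And>z. z \<notin> R \<Longrightarrow> poly A z = poly B z"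
  shows "A = B"
proof (rule poly_eq_on_infinite[of "- R"])
  show "infinite (- R)" using assms(1) infinite_UNIV_char_0 by (metis Compl_eq_Diff_UNIV finite_Diff2 finite.emptyI)
qed (use assms in auto)

lemma order_power_poly:
  fixes q :: "complex poly"
  assumes "q \<noteq> 0"
  shows "order a (q ^ n) = n * order a q"
proof (induction n)
  case 0 then show ?case by simp
next
  case (Suc n)
  have "q * q ^ n \<noteq> 0" using assms by simp
  then show ?case using Suc by (simp add: order_mult)
qed

lemma order_root_unity:
  fixes a :: complex
  assumes D: "D > 0" and a: "a ^ D = 1"
  shows "order a (1 - monom 1 D) = 1"
proof -
  have ne: "(1 - monom 1 D :: complex poly) \<noteq> 0"
  proof
    assume "(1 - monom 1 D :: complex poly) = 0"
    then have "coeff (1 - monom 1 D :: complex poly) 0 = 0" by simp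
    then show False using D by simp
  qed
  have r: "poly (1 - monom 1 D) a = 0" using a by (simp add: poly_monom)
  have "pderiv (1 - monom 1 D :: complex poly) = - monom (of_nat D) (D - 1)"
    by (simp add: pderiv_diff pderiv_monom)
  moreover have "a \<noteq> 0" using a D by (metis power_0_left less_not_refl3 zero_neq_one)
  ultimately have "poly (pderiv (1 - monom 1 D :: complex poly)) a \<noteq> 0"
    using D by (simp add: poly_monom)
  then have "order a (pderiv (1 - monom 1 D :: complex poly)) = 0" by (rule order_0I)
  then show ?thesis using order_pderiv[OF ne r] by simp
qed

lemma periodic_mult:
  fixes d :: "nat \<Rightarrow> complex"
  assumes "\<And>n. d (n + D) = d n"
  shows "d (v + D * t) = d v"
proof (induction t)
  case 0 then show ?case by simp
next
  case (Suc t)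
  have "v + D * Suc t = (v + D * t) + D" by simp
  then show ?case using Suc assms by metis
qed

lemma periodic_mod:
  fixes d :: "nat \<Rightarrow> complex"
  assumes "\<And>n. d (n + D) = d n"
  shows "d n = d (n mod D)"
  using periodic_mult[of d D "n mod D" "n div D", OF assms] by simp



theorem proposition3p2:
  fixes D r :: nat
    and d :: "nat \<Rightarrow> nat \<Rightarrow> complex"
    and p :: "nat \<Rightarrow> complex"
    and L M :: "complex poly"
    and c :: "complex \<Rightarrow> nat \<Rightarrow> complex"
    and \<gamma> :: complex and m :: nat
  assumes D_pos: "D > 0" and r_pos: "r > 0"
    and periodic: "\<And>k n. k < r \<Longrightarrow> d k (n + D) = d k n"
    and lead_nonzero: "\<exists>n. d (r - 1) n \<noteq> 0"
    and p_def: "\<And>n. p n = (\<Sum>k<r. d k n * of_nat n ^ k)"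
    and genfun: "Abs_fps p * fps_of_poly M = fps_of_poly L"
    and lowest_terms: "coprime L M"
    and partial_fractions: "\<And>z. poly M z \<noteq> 0 \<Longrightarrow>
        poly L z / poly M z =
        (\<Sum>a\<in>{a. poly M a = 0}. \<Sum>l=1..order a M. c a l / (a - z) ^ l)"
    and root: "poly M \<gamma> = 0"
    and m_range: "1 \<le> m" "m \<le> order \<gamma> M"
  shows "c \<gamma> m = \<gamma> ^ m * fact (m - 1) *
           (\<Sum>l=m..order \<gamma> M. (-1) ^ (l - m) * of_nat (Stirling l m) *
              (1 / of_nat D) * (\<Sum>v<D. \<gamma> ^ v * d (l - 1) v))"
proof -
  define R where "R = {a. poly M a = 0}"
  have M0: "M \<noteq> 0"
  proof
    assume "M = 0"
    then have "fps_of_poly L = 0" using genfun by simp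
    then have "L = 0" by (metis fps_of_poly_0 fps_of_poly_eq_iff)
    then show False using lowest_terms \<open>M = 0\<close> by simp
  qed
  have finR: "finite R" unfolding R_def using M0 by (rule poly_roots_finite)
  have M00: "poly M 0 \<noteq> 0"
  proof
    assume h: "poly M 0 = 0"
    have "coeff M 0 = 0" using h by (simp add: poly_0_coeff_0)
    then have "coeff L 0 = 0" using arg_cong[OF genfun, of "\<lambda>F. F $ 0"] by simp
    then have "poly L 0 = 0" by (simp add: poly_0_coeff_0)
    then have "[:0,1:] dvd L" "[:0,1:] dvd M" using h by (simp_all add: dvd_iff_poly_eq_0)
    then have "is_unit ([:0,1:] :: complex poly)" using lowest_terms coprime_common_divisor by blast
    then show False by (simp add: is_unit_pCons_iff)
  qed
  have Rnz: "a \<noteq> 0" if "a \<in> R" for a using that M00 unfolding R_def by auto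
  have per: "d k (v + D * t) = d k v" if "k < r" for k v t
    using periodic_mult[of "d k" D v t] periodic[OF that] by blast
  have perm: "d k n = d k (n mod D)" if "k < r" for k n
    using periodic_mod[of "d k" D n] periodic[OF that] by blast
  define W :: "complex poly" where "W = (1 - monom 1 D) ^ r"
  have Wexp: "W = (\<Sum>i\<le>r. monom (of_nat (r choose i) * (-1)^i) (D*i))"
  proof -
    have e: "(1 - monom 1 D :: complex poly) = monom (-1) D + 1" by (simp add: minus_monom[symmetric])
    have "W = (monom (-1) D + 1)^r" unfolding W_def e ..
    also have "\<dots> = (\<Sum>i\<le>r. of_nat (r choose i) * monom (-1) D ^ i * 1 ^ (r - i))"
      by (rule binomial_ring)
    also have "\<dots> = (\<Sum>i\<le>r. monom (of_nat (r choose i) * (-1)^i) (D*i))"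
      by (intro sum.cong refl) (simp add: monom_power of_nat_poly smult_monom mult.commute)
    finally show ?thesis .
  qed
  define G where "G = fps_of_poly W * Abs_fps p"
  have Gnth: "G $ n = (\<Sum>i\<le>r. of_nat (r choose i) * (-1)^i * (if n < D*i then 0 else p (n - D*i)))" for n
  proof -
    have "G = (\<Sum>i\<le>r. fps_const (of_nat (r choose i) * (-1)^i) * (fps_X ^ (D*i) * Abs_fps p))"
      unfolding G_def Wexp fps_of_poly_sum fps_of_poly_monom sum_distrib_right by (simp only: mult.assoc)
    then show ?thesis by (simp add: fps_sum_nth fps_X_power_mult_nth cong: if_cong)
  qed
  have Gz: "G $ n = 0" if "n \<ge> r * D" for n
  proof -
    have "G $ n = (\<Sum>i\<le>r. (-1)^i * of_nat (r choose i) * (\<Sum>k<r. d k n * poly ([:of_nat n, - of_nat D:]^k) (of_nat i)))"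
      unfolding Gnth
    proof (intro sum.cong refl)
      fix i assume "i \<in> {..r}"
      then have iD: "D * i \<le> n" using that by (metis atMost_iff mult.commute mult_le_mono1 order_trans)
      have "p (n - D*i) = (\<Sum>k<r. d k n * poly ([:of_nat n, - of_nat D:]^k) (of_nat i))"
        unfolding p_def
      proof (intro sum.cong refl)
        fix k assume "k \<in> {..<r}"
        then have e1: "d k n = d k (n - D*i)" using per[of k "n - D*i" i] iD by simp
        have e2: "(of_nat (n - D*i) :: complex) = of_nat n - of_nat D * of_nat i" using iD by (simp add: of_nat_diff)
        show "d k (n - D * i) * of_nat (n - D * i) ^ k = d k n * poly ([:of_nat n, - of_nat D:]^k) (of_nat i)"
          unfolding e1 e2 by (simp add: poly_power algebra_simps)
      qed
      then show "of_nat (r choose i) * (-1)^i * (if n < D*i then 0 else p (n - D*i)) =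
         (-1)^i * of_nat (r choose i) * (\<Sum>k<r. d k n * poly ([:of_nat n, - of_nat D:]^k) (of_nat i))"
        using iD by simp
    qed
    also have "\<dots> = (\<Sum>k<r. d k n * (\<Sum>i\<le>r. (-1)^i * of_nat (r choose i) * poly ([:of_nat n, - of_nat D:]^k) (of_nat i)))"
      by (simp add: sum_distrib_left sum.swap[of _ "{..r}"] mult_ac)
    also have "\<dots> = 0"
    proof (rule sum.neutral, intro ballI)
      fix k assume k: "k \<in> {..<r}"
      have "degree ([:of_nat n, - of_nat D:]^k :: complex poly) \<le> k * 1"
        by (rule order.trans[OF degree_power_le]) simp
      then have "degree ([:of_nat n, - of_nat D:]^k :: complex poly) < r" using k by simp
      from alt_sum_poly[OF this] show "d k n * (\<Sum>i\<le>r. (-1)^i * of_nat (r choose i) * poly ([:of_nat n, - of_nat D:]^k) (of_nat i)) = 0"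
        by (simp only: mult_zero_right)
    qed
    finally show ?thesis .
  qed
  define Pp where "Pp = Poly (map (\<lambda>n. G $ n) [0..<r*D])"
  have GPp: "G = fps_of_poly Pp"
  proof (rule fps_ext)
    fix n show "G $ n = fps_of_poly Pp $ n"
      using Gz[of n] by (auto simp: Pp_def nth_default_def)
  qed
  have "fps_of_poly L * fps_of_poly W = fps_of_poly M * G"
    unfolding G_def genfun[symmetric] by (simp add: mult_ac)
  then have "fps_of_poly (L * W) = fps_of_poly (M * Pp)"
    unfolding fps_of_poly_mult GPp .
  then have "L * W = M * Pp" by (simp only: fps_of_poly_eq_iff)
  have LaR: "poly L a \<noteq> 0" if "a \<in> R" for a
  proof
    assume h: "poly L a = 0"
    have "[:-a,1:] dvd L" "[:-a,1:] dvd M" using h that unfolding R_def by (simp_all add: dvd_iff_poly_eq_0)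
    then have "is_unit ([:-a,1:] :: complex poly)" using lowest_terms coprime_common_divisor by blast
    then show False by (simp add: is_unit_pCons_iff)
  qed
  have W10: "(1 - monom 1 D :: complex poly) \<noteq> 0"
  proof
    assume "(1 - monom 1 D :: complex poly) = 0"
    then have "coeff (1 - monom 1 D :: complex poly) 0 = 0" by simp
    then show False using D_pos by simp
  qed
  then have W0: "W \<noteq> 0" unfolding W_def by simp
  have ordW: "order a M \<le> order a W" if "a \<in> R" for a
  proof -
    have L0: "L \<noteq> 0" using LaR[OF that] by auto
    have LW0: "L * W \<noteq> 0" using L0 W0 by simp
    have "order a M \<le> order a (M * Pp)" using LW0 \<open>L * W = M * Pp\<close> by (intro dvd_imp_order_le) simp_all
    also have "\<dots> = order a (L * W)" using \<open>L * W = M * Pp\<close> by simp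
    also have "\<dots> = order a L + order a W" using LW0 by (rule order_mult)
    also have "\<dots> = order a W" using order_0I[OF LaR[OF that]] by simp
    finally show ?thesis .
  qed
  have unity: "a ^ D = 1" if "a \<in> R" for a
  proof -
    have "order a M > 0" using that M0 unfolding R_def by (simp add: order_gt_0_iff)
    then have "order a W > 0" using ordW[OF that] by simp
    then have "poly W a = 0" using W0 order_gt_0_iff by blast
    then have "(1 - a ^ D) ^ r = 0" unfolding W_def by (simp add: poly_power poly_monom)
    then show ?thesis by simp
  qed
  have ordr: "order a M \<le> r" if "a \<in> R" for a
  proof -
    have "order a M \<le> order a W" using ordW[OF that] .
    also have "\<dots> = r * order a (1 - monom 1 D)" unfolding W_def by (rule order_power_poly[OF W10])
    also have "\<dots> = r" using order_root_unity[OF D_pos unity[OF that]] by simp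
    finally show ?thesis .
  qed
  define Qp where "Qp a l = smult ((-1)^l) (M div [:-a,1:]^l)" for a l
  have Mfac: "M = [:a,-1:]^l * Qp a l" if "l \<le> order a M" for a l
  proof -
    have dv: "[:-a,1:]^l dvd M" using order_1[of a M] le_imp_power_dvd[OF that] dvd_trans by blast
    have e1: "[:a,-1:] = smult (-1) [:-a,1::complex:]" by simp
    have "[:a,-1:]^l * Qp a l = smult ((-1)^l * (-1)^l) ([:-a,1:]^l * (M div [:-a,1:]^l))"
      unfolding Qp_def e1 smult_power by (simp add: mult_ac)
    also have "\<dots> = M" using dv by (simp add: power_mult_distrib[symmetric])
    finally show ?thesis by simp
  qed
  have Lid: "L = (\<Sum>a\<in>R. \<Sum>l=1..order a M. smult (c a l) (Qp a l))"
  proof (rule poly_eq_outside_finite[OF finR])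
    fix z assume zR: "z \<notin> R"
    then have Mz: "poly M z \<noteq> 0" unfolding R_def by simp
    have "poly L z = poly M z * (poly L z / poly M z)" using Mz by simp
    also have "\<dots> = (\<Sum>a\<in>R. \<Sum>l=1..order a M. c a l * (poly M z / (a - z) ^ l))"
      unfolding partial_fractions[OF Mz] R_def by (simp add: sum_distrib_left mult_ac)
    also have "\<dots> = poly (\<Sum>a\<in>R. \<Sum>l=1..order a M. smult (c a l) (Qp a l)) z"
      unfolding poly_sum
    proof (intro sum.cong refl)
      fix a l assume aR: "a \<in> R" and l: "l \<in> {1..order a M}"
      have az: "a - z \<noteq> 0" using aR zR by auto
      have "poly M z = (a - z)^l * poly (Qp a l) z"
        using arg_cong[OF Mfac[of l a], of "\<lambda>P. poly P z"] l by (simp add: poly_power)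
      then show "c a l * (poly M z / (a - z) ^ l) = poly (smult (c a l) (Qp a l)) z"
        using az by simp
    qed
    finally show "poly L z = poly (\<Sum>a\<in>R. \<Sum>l=1..order a M. smult (c a l) (Qp a l)) z" .
  qed
  define F where "F = (\<Sum>a\<in>R. \<Sum>l=1..order a M. fps_const (c a l) * Hf a (l-1))"
  have fpsfac: "fps_of_poly ([:a,-1:]^l) = (fps_const a - fps_X)^l" for a :: complex and l
    by (simp add: fps_of_poly_power fps_of_poly_pCons fps_of_poly_const)
  have "F * fps_of_poly M = (\<Sum>a\<in>R. \<Sum>l=1..order a M. fps_const (c a l) * (Hf a (l-1) * fps_of_poly M))"
    unfolding F_def sum_distrib_right by (simp only: mult.assoc)
  also have "\<dots> = (\<Sum>a\<in>R. \<Sum>l=1..order a M. fps_const (c a l) * fps_of_poly (Qp a l))"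
  proof (intro sum.cong refl)
    fix a l assume aR: "a \<in> R" and l: "l \<in> {1..order a M}"
    have "Hf a (l-1) * fps_of_poly M = (Hf a (l-1) * (fps_const a - fps_X)^(Suc (l-1))) * fps_of_poly (Qp a l)"
      using l by (subst Mfac[of l a]) (simp_all add: fps_of_poly_mult fpsfac mult_ac)
    also have "\<dots> = fps_of_poly (Qp a l)" using Hf_inv[OF Rnz[OF aR]] by simp
    finally show "fps_const (c a l) * (Hf a (l-1) * fps_of_poly M) = fps_const (c a l) * fps_of_poly (Qp a l)" by simp
  qed
  also have "\<dots> = fps_of_poly L"
    by (subst Lid) (simp add: fps_of_poly_sum fps_of_poly_smult)
  finally have "Abs_fps p * fps_of_poly M = F * fps_of_poly M" using genfun by simp
  moreover have "fps_of_poly M \<noteq> 0" using M0 by (metis fps_of_poly_0 fps_of_poly_eq_iff)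
  ultimately have PF: "Abs_fps p = F" by simp
  have prep: "p n = (\<Sum>a\<in>R. \<Sum>l=1..order a M. c a l * of_nat ((n + (l-1)) choose (l-1)) / a ^ (n + (l-1) + 1))" for n
  proof -
    have "p n = F $ n" using PF by (metis fps_nth_Abs_fps)
    then show ?thesis by (simp add: F_def fps_sum_nth Hf_nth)
  qed
  have dform: "d k v = (\<Sum>a\<in>R. \<Sum>l=1..order a M. c a l / a ^ (v + l) * coeff (Pb (l-1)) k)"
    if "k < r" "v < D" for k v
  proof -
    define PL where "PL = (\<Sum>k'<r. monom (d k' v) k')"
    define PR where "PR = (\<Sum>a\<in>R. \<Sum>l=1..order a M. smult (c a l / a ^ (v + l)) (Pb (l-1)))"
    define S where "S = range (\<lambda>t. of_nat (v + D*t) :: complex)"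
    have inj: "inj (\<lambda>t. of_nat (v + D*t) :: complex)"
      using D_pos by (auto simp: inj_def)
    have infS: "infinite S" unfolding S_def using inj finite_imageD infinite_UNIV_nat by blast
    have "PL = PR"
    proof (rule poly_eq_on_infinite[OF infS])
      fix z assume "z \<in> S"
      then obtain t where zt: "z = of_nat (v + D*t)" unfolding S_def by auto
      define x where "x = v + D*t"
      have "poly PL z = (\<Sum>k'<r. d k' v * z ^ k')" by (simp add: PL_def poly_sum poly_monom)
      also have "\<dots> = p x" unfolding p_def x_def zt by (intro sum.cong refl) (simp add: per)
      also have "\<dots> = (\<Sum>a\<in>R. \<Sum>l=1..order a M. c a l * of_nat ((x + (l-1)) choose (l-1)) / a ^ (x + (l-1) + 1))"
        by (rule prep)
      also have "\<dots> = poly PR z"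
        unfolding PR_def poly_sum
      proof (intro sum.cong refl)
        fix a l assume aR: "a \<in> R" and l: "l \<in> {1..order a M}"
        have "a ^ (x + (l-1) + 1) = a ^ (v + l) * (a ^ D) ^ t" using l
          by (simp add: x_def power_add power_mult[symmetric] algebra_simps)
        also have "\<dots> = a ^ (v + l)" using unity[OF aR] by simp
        finally have e: "a ^ (x + (l-1) + 1) = a ^ (v + l)" .
        show "c a l * of_nat ((x + (l-1)) choose (l-1)) / a ^ (x + (l-1) + 1) = poly (smult (c a l / a ^ (v + l)) (Pb (l-1))) z"
          unfolding e zt x_def[symmetric] by (simp add: poly_Pb)
      qed
      finally show "poly PL z = poly PR z" .
    qed
    then have "coeff PL k = coeff PR k" by simp
    moreover have "coeff PL k = d k v"
      using that(1) by (simp add: PL_def coeff_sum coeff_monom sum.delta)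
    moreover have "coeff PR k = (\<Sum>a\<in>R. \<Sum>l=1..order a M. c a l / a ^ (v + l) * coeff (Pb (l-1)) k)"
      by (simp add: PR_def coeff_sum)
    ultimately show ?thesis by simp
  qed
  have Aform: "(1 / of_nat D) * (\<Sum>v<D. \<gamma> ^ v * d k v) = (\<Sum>l=1..order \<gamma> M. c \<gamma> l / \<gamma> ^ l * coeff (Pb (l-1)) k)"
    if "k < r" for k
  proof -
    define Y where "Y a = (\<Sum>l=1..order a M. c a l / a ^ l * coeff (Pb (l-1)) k)" for a
    have gR: "\<gamma> \<in> R" using root unfolding R_def by simp
    have geo: "(\<Sum>v<D. (\<gamma> / a) ^ v) = (if a = \<gamma> then of_nat D else 0)" if "a \<in> R" for a
    proof (cases "a = \<gamma>")
      case True then show ?thesis using Rnz[OF gR] by simp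
    next
      case False
      have a0: "a \<noteq> 0" using Rnz[OF that] .
      have w1: "\<gamma> / a \<noteq> 1" using False a0 by (simp add: divide_eq_1_iff)
      have wD: "(\<gamma> / a) ^ D = 1" using unity[OF that] unity[OF gR] by (simp add: power_divide)
      show ?thesis using False geometric_sum[OF w1, of D] wD by simp
    qed
    have "(\<Sum>v<D. \<gamma> ^ v * d k v) = (\<Sum>v<D. \<Sum>a\<in>R. \<Sum>l=1..order a M. (c a l / a ^ l * coeff (Pb (l-1)) k) * (\<gamma> / a) ^ v)"
    proof (rule sum.cong[OF refl])
      fix v assume "v \<in> {..<D}"
      then have "d k v = (\<Sum>a\<in>R. \<Sum>l=1..order a M. c a l / a ^ (v + l) * coeff (Pb (l-1)) k)"
        using dform[OF that] by simp
      then have "\<gamma> ^ v * d k v = (\<Sum>a\<in>R. \<Sum>l=1..order a M. \<gamma> ^ v * (c a l / a ^ (v + l) * coeff (Pb (l-1)) k))"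
        by (simp add: sum_distrib_left)
      also have "\<dots> = (\<Sum>a\<in>R. \<Sum>l=1..order a M. (c a l / a ^ l * coeff (Pb (l-1)) k) * (\<gamma> / a) ^ v)"
      proof (intro sum.cong refl)
        fix a l assume "a \<in> R"
        then have "a \<noteq> 0" by (rule Rnz)
        then show "\<gamma> ^ v * (c a l / a ^ (v + l) * coeff (Pb (l-1)) k) = (c a l / a ^ l * coeff (Pb (l-1)) k) * (\<gamma> / a) ^ v"
          by (simp add: power_add power_divide field_simps)
      qed
      finally show "\<gamma> ^ v * d k v = (\<Sum>a\<in>R. \<Sum>l=1..order a M. (c a l / a ^ l * coeff (Pb (l-1)) k) * (\<gamma> / a) ^ v)" .
    qed
    also have "\<dots> = (\<Sum>a\<in>R. \<Sum>l=1..order a M. (c a l / a ^ l * coeff (Pb (l-1)) k) * (\<Sum>v<D. (\<gamma> / a) ^ v))"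
      by (simp add: sum_distrib_left sum.swap[of _ "{..<D}"])
    also have "\<dots> = (\<Sum>a\<in>R. Y a * (if a = \<gamma> then of_nat D else 0))"
      by (intro sum.cong refl) (simp add: geo Y_def sum_distrib_right)
    also have "\<dots> = (\<Sum>a\<in>R. if a = \<gamma> then Y a * of_nat D else 0)"
      by (intro sum.cong refl) simp
    also have "\<dots> = Y \<gamma> * of_nat D" using gR finR by (simp add: sum.delta)
    finally show ?thesis using D_pos unfolding Y_def by simp
  qed
  define N where "N = order \<gamma> M"
  have gR: "\<gamma> \<in> R" using root unfolding R_def by simp
  have Nr: "N \<le> r" using ordr[OF gR] unfolding N_def .
  have g0: "\<gamma> \<noteq> 0" using Rnz[OF gR] .
  have cPb: "coeff (Pb (j-1)) (l-1) = of_nat (stirling j l) / fact (j-1)" if "j \<ge> 1" "l \<ge> 1" for j l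
    using that by (simp add: Pb_def coeff_poch1)
  have inner: "(\<Sum>l=m..N. (-1)^(l-m) * of_nat (Stirling l m) * of_nat (stirling j l)) = (if j = m then 1 else (0::complex))"
    if "j \<le> N" for j
  proof -
    have "(\<Sum>l=m..N. (-1)^(l-m) * of_nat (Stirling l m) * of_nat (stirling j l))
        = (\<Sum>l<Suc N. (-1)^(l+m) * of_nat (Stirling l m) * of_nat (stirling j l) :: complex)"
    proof (rule sum.mono_neutral_cong_left)
      show "\<forall>i\<in>{..<Suc N} - {m..N}. (-1)^(i+m) * of_nat (Stirling i m) * of_nat (stirling j i) = (0::complex)"
        by auto
      show "(-1)^(l-m) * of_nat (Stirling l m) * of_nat (stirling j l) = ((-1)^(l+m) * of_nat (Stirling l m) * of_nat (stirling j l) :: complex)"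
        if "l \<in> {m..N}" for l
      proof -
        have e: "l + m = (l - m) + 2 * m" using that by simp
        have "(-1::complex)^(l+m) = (-1)^(l-m) * ((-1)^2)^m" unfolding e by (simp only: power_add power_mult)
        then show ?thesis by simp
      qed
    qed auto
    also have "\<dots> = of_int (\<Sum>l<Suc N. (-1)^(l+m) * int (Stirling l m) * int (stirling j l))"
      by simp
    also have "\<dots> = (if j = m then 1 else 0)"
      using stirling_inv[of j "Suc N" m] that by simp
    finally show ?thesis .
  qed
  have "\<gamma> ^ m * fact (m - 1) *
           (\<Sum>l=m..N. (-1) ^ (l - m) * of_nat (Stirling l m) *
              (1 / of_nat D) * (\<Sum>v<D. \<gamma> ^ v * d (l - 1) v))
      = \<gamma> ^ m * fact (m - 1) *
           (\<Sum>l=m..N. (-1) ^ (l - m) * of_nat (Stirling l m) *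
              (\<Sum>j=1..N. c \<gamma> j / \<gamma> ^ j / fact (j-1) * of_nat (stirling j l)))"
  proof -
    have "(-1) ^ (l - m) * of_nat (Stirling l m) * (1 / of_nat D) * (\<Sum>v<D. \<gamma> ^ v * d (l - 1) v)
       = (-1) ^ (l - m) * of_nat (Stirling l m) *
              (\<Sum>j=1..N. c \<gamma> j / \<gamma> ^ j / fact (j-1) * of_nat (stirling j l))" if "l \<in> {m..N}" for l
    proof -
      have l1: "l \<ge> 1" "l - 1 < r" using that m_range Nr by auto
      have "(1 / of_nat D) * (\<Sum>v<D. \<gamma> ^ v * d (l - 1) v) = (\<Sum>j=1..N. c \<gamma> j / \<gamma> ^ j * coeff (Pb (j-1)) (l-1))"
        using Aform[OF l1(2)] unfolding N_def .
      also have "\<dots> = (\<Sum>j=1..N. c \<gamma> j / \<gamma> ^ j / fact (j-1) * of_nat (stirling j l))"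
      proof (intro sum.cong refl)
        fix j assume "j \<in> {1..N}"
        then have "coeff (Pb (j-1)) (l-1) = of_nat (stirling j l) / fact (j-1)" using cPb[of j l] l1 by simp
        then show "c \<gamma> j / \<gamma> ^ j * coeff (Pb (j-1)) (l-1) = c \<gamma> j / \<gamma> ^ j / fact (j-1) * of_nat (stirling j l)"
          by simp
      qed
      finally have h: "(1 / of_nat D) * (\<Sum>v<D. \<gamma> ^ v * d (l - 1) v) = (\<Sum>j=1..N. c \<gamma> j / \<gamma> ^ j / fact (j-1) * of_nat (stirling j l))" .
      show ?thesis by (simp only: mult.assoc h)
    qed
    then have "(\<Sum>l=m..N. (-1) ^ (l - m) * of_nat (Stirling l m) * (1 / of_nat D) * (\<Sum>v<D. \<gamma> ^ v * d (l - 1) v))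
      = (\<Sum>l=m..N. (-1) ^ (l - m) * of_nat (Stirling l m) *
              (\<Sum>j=1..N. c \<gamma> j / \<gamma> ^ j / fact (j-1) * of_nat (stirling j l)))"
      by (rule sum.cong[OF refl])
    then show ?thesis by simp
  qed
  also have "\<dots> = \<gamma> ^ m * fact (m - 1) *
     (\<Sum>j=1..N. c \<gamma> j / \<gamma> ^ j / fact (j-1) * (\<Sum>l=m..N. (-1) ^ (l - m) * of_nat (Stirling l m) * of_nat (stirling j l)))"
    by (simp add: sum_distrib_left sum_distrib_right mult_ac sum.swap[of _ "{m..N}"])
  also have "\<dots> = \<gamma> ^ m * fact (m - 1) * (\<Sum>j=1..N. c \<gamma> j / \<gamma> ^ j / fact (j-1) * (if j = m then 1 else 0))"
    by (intro arg_cong2[where f="(*)"] refl sum.cong) (auto simp: inner)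
  also have "\<dots> = \<gamma> ^ m * fact (m - 1) * (c \<gamma> m / \<gamma> ^ m / fact (m-1))"
    using m_range by (simp add: N_def sum.delta'[symmetric] if_distrib cong: if_cong)
  also have "\<dots> = c \<gamma> m" using g0 by simp
  finally show ?thesis unfolding N_def by simp
qed

end
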